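(* There exists an instance of the influential bandit problem (with $K=2$, $A$ symmetric positive semi-definite with $\max_{ij}|A_{ij}|\le 2$, and zero noise) on which the standard LCB algorithm incurs regret $\Omega\!\left(T^2/\log^2 T\right)$ as $T\to\infty$.
   Context: Influential bandit problem: there are $K$ arms, an unknown symmetric positive semi-definite interaction matrix $A\in\mathbb{R}^{K\times K}$ and an unknown initial loss vector $l^{(1)}\in\mathbb{R}^K$. At each round $t=1,\dots,T$ the algorithm chooses $i^{(t)}\in[K]$ based on past observations, observes $L^{(t)}=l^{(t)}_{i^{(t)}}+\xi^{(t)}$ where $\xi^{(t)}$ is zero-mean noise, and then $l^{(t+1)}_j=l^{(t)}_j+A_{i^{(t)}j}$ for all $j\in[K]$. The regret of the sequence of choices is $\sum_{t=1}^T l^{(t)}_{i^{(t)}}-\min_{(j_1,\dots,j_T)\in[K]^T}\sum_{t=1}^T l^{(t)}_{j_t}$, where in the minimum the losses evolve under the same dynamics driven by $j_1,\dots,j_T$. The standard LCB algorithm chooses $i^{(t)}=\arg\min_{i\in[K]}\big(\hat\mu_i-\sqrt{2\log t/n_i}\big)$, where $n_i$ is the number of times arm $i$ has been chosen before round $t$ and $\hat\mu_i$ is the empirical mean of its observed losses; ties are broken in favor of the smallest index, and an arm with $n_i=0$ is given score $-\infty$. (The witnessing instance in the paper is $K=2$, $A=\begin{pmatrix}1&1\\1&2\end{pmatrix}$, $l^{(1)}=(1,1)$, $\xi^{(t)}=0$.) *)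

theory Defs
  imports Complex_Main "HOL-Library.Extended_Real" "HOL-Library.FuncSet" "HOL-Library.Landau_Symbols"
begin

text \<open>Arms are 0,...,K-1. Rounds t = 1,2,...; internally index k = t - 1.
  loss_traj A l1 js k is the loss vector l^(k+1) when the arm chosen at round k+1 is js k.\<close>

fun loss_traj :: "(nat \<Rightarrow> nat \<Rightarrow> real) \<Rightarrow> (nat \<Rightarrow> real) \<Rightarrow> (nat \<Rightarrow> nat) \<Rightarrow> nat \<Rightarrow> nat \<Rightarrow> real" where
  "loss_traj A l1 js 0 = l1"
| "loss_traj A l1 js (Suc k) = (\<lambda>j. loss_traj A l1 js k j + A (js k) j)"

definition cum_loss :: "(nat \<Rightarrow> nat \<Rightarrow> real) \<Rightarrow> (nat \<Rightarrow> real) \<Rightarrow> (nat \<Rightarrow> nat) \<Rightarrow> nat \<Rightarrow> real" where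
  "cum_loss A l1 js T = (\<Sum>k<T. loss_traj A l1 js k (js k))"

definition regret :: "nat \<Rightarrow> (nat \<Rightarrow> nat \<Rightarrow> real) \<Rightarrow> (nat \<Rightarrow> real) \<Rightarrow> (nat \<Rightarrow> nat) \<Rightarrow> nat \<Rightarrow> real" where
  "regret K A l1 js T = cum_loss A l1 js T
     - Min ((\<lambda>js'. cum_loss A l1 js' T) ` ({..<T} \<rightarrow>\<^sub>E {..<K}))"

definition lcb_score :: "nat \<Rightarrow> nat \<Rightarrow> real \<Rightarrow> ereal" where
  "lcb_score t n s = (if n = 0 then -\<infinity> else ereal (s / real n - sqrt (2 * ln (real t) / real n)))"

definition lcb_select :: "nat \<Rightarrow> nat \<Rightarrow> (nat \<Rightarrow> nat) \<Rightarrow> (nat \<Rightarrow> real) \<Rightarrow> nat" where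
  "lcb_select K t n s = (LEAST i. i < K \<and> (\<forall>j<K. lcb_score t (n i) (s i) \<le> lcb_score t (n j) (s j)))"

text \<open>State after k rounds: current loss vector, pull counts, sums of observed losses.
  xi t is the noise at round t.\<close>
fun lcb_state :: "nat \<Rightarrow> (nat \<Rightarrow> nat \<Rightarrow> real) \<Rightarrow> (nat \<Rightarrow> real) \<Rightarrow> (nat \<Rightarrow> real) \<Rightarrow> nat
    \<Rightarrow> (nat \<Rightarrow> real) \<times> (nat \<Rightarrow> nat) \<times> (nat \<Rightarrow> real)" where
  "lcb_state K A l1 xi 0 = (l1, \<lambda>_. 0, \<lambda>_. 0)"
| "lcb_state K A l1 xi (Suc k) = (case lcb_state K A l1 xi k of (l, n, s) \<Rightarrow>
     (let i = lcb_select K (Suc k) n s; L = l i + xi (Suc k) in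
      (\<lambda>j. l j + A i j, n(i := n i + 1), s(i := s i + L))))"

definition lcb_choice :: "nat \<Rightarrow> (nat \<Rightarrow> nat \<Rightarrow> real) \<Rightarrow> (nat \<Rightarrow> real) \<Rightarrow> (nat \<Rightarrow> real) \<Rightarrow> nat \<Rightarrow> nat" where
  "lcb_choice K A l1 xi k = (case lcb_state K A l1 xi k of (l, n, s) \<Rightarrow> lcb_select K (Suc k) n s)"

definition lcb_regret :: "nat \<Rightarrow> (nat \<Rightarrow> nat \<Rightarrow> real) \<Rightarrow> (nat \<Rightarrow> real) \<Rightarrow> (nat \<Rightarrow> real) \<Rightarrow> nat \<Rightarrow> real" where
  "lcb_regret K A l1 xi T = regret K A l1 (lcb_choice K A l1 xi) T"

end

theory Submission
  imports Defs
begin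


definition AA :: "nat \<Rightarrow> nat \<Rightarrow> real" where
  "AA i j = (if i = 1 \<and> j = 1 then 2 else 1)"

abbreviation st :: "nat \<Rightarrow> (nat \<Rightarrow> real) \<times> (nat \<Rightarrow> nat) \<times> (nat \<Rightarrow> real)" where
  "st k \<equiv> lcb_state 2 AA (\<lambda>_. 0) (\<lambda>_. 0) k"

definition LL where "LL k = fst (st k)"
definition NN where "NN k = fst (snd (st k))"
definition SS where "SS k = snd (snd (st k))"
definition ch where "ch k = lcb_choice 2 AA (\<lambda>_. 0) (\<lambda>_. 0) k"

lemma all2: "(\<forall>j<(2::nat). P j) \<longleftrightarrow> P 0 \<and> P 1"
  by (auto simp: numeral_2_eq_2 less_Suc_eq)

lemma sel2: "lcb_select 2 t n s = (if lcb_score t (n 0) (s 0) \<le> lcb_score t (n 1) (s 1) then 0 else 1)"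
proof (cases "lcb_score t (n 0) (s 0) \<le> lcb_score t (n 1) (s 1)")
  case True
  show ?thesis unfolding lcb_select_def using True
    by (intro Least_equality) (auto simp: all2)
next
  case False
  show ?thesis unfolding lcb_select_def using False
    by (intro Least_equality) (auto simp: all2 not_le less_Suc_eq numeral_2_eq_2)
qed

lemma ch_eq: "ch k = lcb_select 2 (Suc k) (NN k) (SS k)"
  by (simp add: ch_def lcb_choice_def NN_def SS_def split_beta)

lemma ch01: "ch k = 0 \<or> ch k = 1"
  by (simp add: ch_eq sel2)

lemma st_Suc: "LL (Suc k) = (\<lambda>j. LL k j + AA (ch k) j)"
  "NN (Suc k) = (NN k)(ch k := NN k (ch k) + 1)"
  "SS (Suc k) = (SS k)(ch k := SS k (ch k) + LL k (ch k))"
  by (simp_all add: LL_def NN_def SS_def ch_eq split_beta Let_def)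

lemma st_0: "LL 0 = (\<lambda>_. 0)" "NN 0 = (\<lambda>_. 0)" "SS 0 = (\<lambda>_. 0)"
  by (simp_all add: LL_def NN_def SS_def)



lemma arm0_bound:
  fixes n0 m k :: nat and S0 S1 :: real
  assumes sc: "lcb_score (Suc k) n0 S0 \<le> lcb_score (Suc k) m S1" and nk: "n0 + m = k" and m1: "m \<ge> 1"
    and s1: "S1 \<ge> real m * (real m - 1)" and s0: "S0 \<ge> real n0 * (real n0 - 1) / 2"
  shows "real k \<le> 2 * S1 / real m + real m + 5"
proof -
  define \<mu> where "\<mu> = S1 / real m"
  have mpos: "real m > 0" using m1 by simp
  have mu1: "\<mu> \<ge> real m - 1" unfolding \<mu>_def using s1 mpos by (simp add: field_simps)
  have goal: "real k \<le> 2 * \<mu> + real m + 5 \<Longrightarrow> ?thesis" unfolding \<mu>_def by simp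
  show ?thesis
  proof (cases "n0 = 0")
    case True
    hence "real k \<le> 2 * \<mu> + real m + 5" using nk mu1 m1 by simp
    thus ?thesis by (rule goal)
  next
    case False
    hence n0pos: "real n0 > 0" by simp
    define w0 where "w0 = sqrt (2 * ln (real (Suc k)) / real n0)"
    define w1 where "w1 = sqrt (2 * ln (real (Suc k)) / real m)"
    have w1nn: "w1 \<ge> 0" unfolding w1_def by simp
    have "S0 / real n0 - w0 \<le> \<mu> - w1"
      using sc False m1 unfolding lcb_score_def w0_def w1_def \<mu>_def by simp
    hence A: "S0 / real n0 - w0 \<le> \<mu>" using w1nn by simp
    have B: "2 * (S0 / real n0) \<ge> real n0 - 1" using s0 n0pos by (simp add: field_simps)
    have C: "real n0 - 1 \<le> 2 * \<mu> + 2 * w0" using A B by linarith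
    show ?thesis
    proof (cases "w0 \<le> 2")
      case True
      have "real k = real n0 + real m" using nk by simp
      hence "real k \<le> 2 * \<mu> + real m + 5" using C True by linarith
      thus ?thesis by (rule goal)
    next
      case False
      have "2 * ln (real (Suc k)) / real n0 > 4"
      proof (rule ccontr)
        assume "\<not> ?thesis"
        hence "sqrt (2 * ln (real (Suc k)) / real n0) \<le> sqrt 4" by (intro real_sqrt_le_mono) simp
        thus False using False unfolding w0_def by simp
      qed
      hence "2 * ln (real (Suc k)) > 4 * real n0" using n0pos by (simp add: field_simps)
      moreover have "ln (real (Suc k)) \<le> real k" using ln_le_minus_one[of "real (Suc k)"] by simp
      ultimately have "2 * real n0 < real k" by simp
      hence "real n0 < real m" using nk by simp
      have "real k = real n0 + real m" using nk by simp
      hence "real k \<le> 2 * \<mu> + real m + 5" using \<open>real n0 < real m\<close> mu1 by linarith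
      thus ?thesis by (rule goal)
    qed
  qed
qed

lemma ln_step: "m \<ge> 1 \<Longrightarrow> ln (real m + 1) - ln (real m) \<ge> 1 / (real m + 1)"
proof -
  assume m: "m \<ge> 1"
  have p: "real m > 0" using m by simp
  have "ln (real m / (real m + 1)) \<le> real m / (real m + 1) - 1"
    using p by (intro ln_le_minus_one) simp
  also have "\<dots> = - 1 / (real m + 1)" using p by (simp add: field_simps)
  finally show ?thesis using p by (simp add: ln_divide_pos)
qed



lemma Qstep:
  fixes m :: nat and S1 k :: real
  assumes m1: "m \<ge> 1" and Q: "S1 \<le> real m * (real m + 1) * (1/2 + 3 * ln (real m))"
    and P: "k \<le> 2 * S1 / real m + real m + 6" and S1nn: "S1 \<ge> 0"
  shows "S1 + k + real m \<le> (real m + 1) * (real m + 2) * (1/2 + 3 * ln (real m + 1))"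
proof -
  define B where "B = 1/2 + 3 * ln (real m)"
  have mp: "real m > 0" using m1 by simp
  have 1: "S1 + k + real m \<le> S1 * (real m + 2) / real m + 2 * real m + 6"
    using P mp by (simp add: field_simps)
  have "S1 * (real m + 2) / real m \<le> real m * (real m + 1) * B * (real m + 2) / real m"
    using Q mp unfolding B_def by (intro divide_right_mono mult_right_mono) auto
  also have "\<dots> = (real m + 1) * (real m + 2) * B" using mp by (simp add: field_simps)
  finally have 2: "S1 * (real m + 2) / real m \<le> (real m + 1) * (real m + 2) * B" .
  have ls: "ln (real m + 1) - ln (real m) \<ge> 1 / (real m + 1)" using ln_step[OF m1] .
  have "3 * (real m + 1) * (real m + 2) * (ln (real m + 1) - ln (real m)) \<ge> 3 * (real m + 1) * (real m + 2) * (1 / (real m + 1))"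
    using ls mp by (intro mult_left_mono) auto
  moreover have "3 * (real m + 1) * (real m + 2) * (1 / (real m + 1)) = 3 * real m + 6"
    using mp by (simp add: field_simps)
  ultimately have 3: "3 * (real m + 1) * (real m + 2) * (ln (real m + 1) - ln (real m)) \<ge> 3 * real m + 6"
    by linarith
  have eq: "(real m + 1) * (real m + 2) * (1/2 + 3 * ln (real m + 1)) = (real m + 1) * (real m + 2) * B + 3 * (real m + 1) * (real m + 2) * (ln (real m + 1) - ln (real m))"
    unfolding B_def by (simp add: algebra_simps)
  define D where "D = 3 * (real m + 1) * (real m + 2) * (ln (real m + 1) - ln (real m))"
  define E where "E = (real m + 1) * (real m + 2) * B"
  define F where "F = S1 * (real m + 2) / real m"
  have "S1 + k + real m \<le> E + D" using 1 2 3 mp unfolding D_def[symmetric] E_def[symmetric] F_def[symmetric] by linarith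
  thus ?thesis using eq unfolding D_def E_def by simp
qed



definition Inv :: "nat \<Rightarrow> bool" where
  "Inv k \<longleftrightarrow> LL k 0 = real k \<and> LL k 1 = real k + real (NN k 1) \<and> NN k 0 + NN k 1 = k \<and>
    SS k 1 \<ge> real (NN k 1) * (real (NN k 1) - 1) \<and>
    SS k 0 \<ge> real (NN k 0) * (real (NN k 0) - 1) / 2 \<and>
    SS k 1 \<le> real (NN k 1) * (real k - 1) \<and>
    (NN k 1 \<ge> 1 \<longrightarrow> real k \<le> 2 * SS k 1 / real (NN k 1) + real (NN k 1) + 6) \<and>
    SS k 1 \<le> real (NN k 1) * (real (NN k 1) + 1) * (1/2 + 3 * ln (real (NN k 1))) \<and>
    (k \<ge> 2 \<longrightarrow> NN k 1 \<ge> 1)"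

lemma AA_simps: "AA i 0 = 1" "AA 0 j = 1" "AA 1 1 = 2"
  by (auto simp: AA_def)

lemma inv: "Inv k"
proof (induction k)
  case 0
  show ?case by (simp add: Inv_def st_0)
next
  case (Suc k)
  define m where "m = NN k 1"
  define n0 where "n0 = NN k 0"
  define S0 where "S0 = SS k 0"
  define S1 where "S1 = SS k 1"
  have I1: "LL k 0 = real k" and I2: "LL k 1 = real k + real m" and I3: "n0 + m = k"
    and I4: "S1 \<ge> real m * (real m - 1)" and I5: "S0 \<ge> real n0 * (real n0 - 1) / 2"
    and I6: "S1 \<le> real m * (real k - 1)"
    and I7: "m \<ge> 1 \<longrightarrow> real k \<le> 2 * S1 / real m + real m + 6"
    and I8: "S1 \<le> real m * (real m + 1) * (1/2 + 3 * ln (real m))"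
    and I9: "k \<ge> 2 \<longrightarrow> m \<ge> 1"
    using Suc.IH unfolding Inv_def m_def n0_def S0_def S1_def by auto
  have S1nn: "S1 \<ge> 0"
  proof (cases "m = 0")
    case True then show ?thesis using I4 by simp
  next
    case False then show ?thesis using I4 by (intro order_trans[OF _ I4]) simp
  qed
  have S0nn: "S0 \<ge> 0"
  proof (cases "n0 = 0")
    case True then show ?thesis using I5 by simp
  next
    case False then show ?thesis using I5 by (intro order_trans[OF _ I5]) simp
  qed
  have chk: "ch k = (if lcb_score (Suc k) n0 S0 \<le> lcb_score (Suc k) m S1 then 0 else 1)"
    by (simp add: ch_eq sel2 m_def n0_def S0_def S1_def)
  show ?case
  proof (cases "lcb_score (Suc k) n0 S0 \<le> lcb_score (Suc k) m S1")
    case True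
    hence c: "ch k = 0" using chk by simp
    have N': "NN (Suc k) 1 = m" "NN (Suc k) 0 = n0 + 1" using c by (simp_all add: st_Suc m_def n0_def)
    have S': "SS (Suc k) 1 = S1" "SS (Suc k) 0 = S0 + real k" using c I1 by (simp_all add: st_Suc S1_def S0_def)
    have L': "LL (Suc k) 0 = LL k 0 + 1" "LL (Suc k) 1 = LL k 1 + 1" using c by (simp_all add: st_Suc AA_def)
    have P: "m \<ge> 1 \<longrightarrow> real k \<le> 2 * S1 / real m + real m + 5"
    proof
      assume "m \<ge> 1"
      thus "real k \<le> 2 * S1 / real m + real m + 5"
        using arm0_bound[OF True I3 _ I4 I5] by simp
    qed
    have m1: "Suc k \<ge> 2 \<longrightarrow> m \<ge> 1"
    proof
      assume "Suc k \<ge> 2"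
      show "m \<ge> 1"
      proof (rule ccontr)
        assume "\<not> m \<ge> 1"
        hence "m = 0" by simp
        hence "n0 = k" "k \<ge> 1" using I3 \<open>Suc k \<ge> 2\<close> by auto
        hence "lcb_score (Suc k) m S1 = -\<infinity>" "lcb_score (Suc k) n0 S0 \<noteq> -\<infinity>"
          using \<open>m = 0\<close> by (auto simp: lcb_score_def)
        thus False using True by simp
      qed
    qed
    have S0': "S0 + real k \<ge> real (n0 + 1) * (real (n0 + 1) - 1) / 2"
    proof -
      have "real n0 \<le> real k" using I3 by simp
      hence "real (n0 + 1) * (real (n0 + 1) - 1) / 2 = real n0 * (real n0 - 1) / 2 + real n0"
        by (simp add: field_simps)
      thus ?thesis using I5 \<open>real n0 \<le> real k\<close> by linarith
    qed
    show ?thesis unfolding Inv_def N' S' L' I1 I2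
      using I3 I4 I6 I8 P m1 S0' I9 by (auto simp: algebra_simps)
  next
    case False
    hence c: "ch k = 1" using chk by simp
    have N': "NN (Suc k) 1 = m + 1" "NN (Suc k) 0 = n0" using c by (simp_all add: st_Suc m_def n0_def)
    have S': "SS (Suc k) 1 = S1 + real k + real m" "SS (Suc k) 0 = S0" using c I2 by (simp_all add: st_Suc S1_def S0_def)
    have L': "LL (Suc k) 0 = LL k 0 + 1" "LL (Suc k) 1 = LL k 1 + 2" using c by (simp_all add: st_Suc AA_def)
    have A4: "S1 + real k + real m \<ge> real (m + 1) * (real (m + 1) - 1)"
    proof -
      have "real m \<le> real k" using I3 by simp
      thus ?thesis using I4 by (simp add: algebra_simps)
    qed
    have A6: "S1 + real k + real m \<le> real (m + 1) * (real (Suc k) - 1)"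
      using I6 by (simp add: algebra_simps)
    have A7: "real (Suc k) \<le> 2 * (S1 + real k + real m) / real (m + 1) + real (m + 1) + 6"
    proof (cases "m = 0")
      case True
      hence "S1 = 0" using I6 S1nn by simp
      thus ?thesis using True by simp
    next
      case False
      hence mp: "real m > 0" by simp
      have "2 * S1 / real m \<le> 2 * (S1 + real k + real m) / real (m + 1)"
      proof -
        have "S1 \<le> real m * (real k + real m)" using I6 mp
          by (smt (verit) mult_left_mono of_nat_0_le_iff)
        hence "S1 * (real m + 1) \<le> (S1 + real k + real m) * real m"
          by (simp add: algebra_simps)
        thus ?thesis using mp by (simp add: field_simps)
      qed
      thus ?thesis using I7 False by simp
    qed
    have A8: "S1 + real k + real m \<le> real (m + 1) * (real (m + 1) + 1) * (1/2 + 3 * ln (real (m + 1)))"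
    proof (cases "m = 0")
      case True
      hence "S1 = 0" using I6 S1nn by simp
      moreover have "k \<le> 1" using I9 True by linarith
      ultimately show ?thesis using True by simp
    next
      case False
      hence "m \<ge> 1" by simp
      have "S1 + real k + real m \<le> (real m + 1) * (real m + 2) * (1/2 + 3 * ln (real m + 1))"
        using Qstep[OF \<open>m \<ge> 1\<close> I8 _ S1nn, where k="real k"] I7 \<open>m \<ge> 1\<close> by blast
      moreover have "real (m + 1) * (real (m + 1) + 1) = (real m + 1) * (real m + 2)" by (simp add: algebra_simps)
      ultimately show ?thesis by (simp add: add.commute)
    qed
    show ?thesis unfolding Inv_def N' S' L' I1 I2
      using I3 I5 A4 A6 A7 A8 by (auto simp: algebra_simps)
  qed
qed



lemma ln_big: fixes x :: real assumes "x \<ge> 16384" shows "64 * ln x \<le> x" "ln x \<ge> 4"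
proof -
  have xp: "x > 0" using assms by simp
  have sx: "sqrt x \<ge> 128"
  proof -
    have "sqrt 16384 = (128::real)" by (simp add: real_sqrt_unique)
    thus ?thesis using real_sqrt_le_mono[OF assms] by simp
  qed
  have "ln x = 2 * ln (sqrt x)" using xp by (simp add: ln_sqrt)
  also have "\<dots> \<le> 2 * (sqrt x - 1)" using ln_le_minus_one[of "sqrt x"] sx xp by (simp add: algebra_simps)
  finally have "ln x \<le> 2 * sqrt x" by simp
  hence "64 * ln x \<le> 128 * sqrt x" by simp
  also have "\<dots> \<le> sqrt x * sqrt x" using sx xp by (intro mult_right_mono) auto
  also have "\<dots> = x" using xp by simp
  finally show "64 * ln x \<le> x" .
  have "1 \<le> ln (3::real)" using exp_le by (subst ln_ge_iff) auto
  hence "4 \<le> ln ((3::real) ^ 4)" by (subst ln_realpow) auto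
  also have "\<dots> \<le> ln x" using assms by (intro ln_mono) auto
  finally show "ln x \<ge> 4" .
qed

lemma final_arith:
  fixes T m :: real
  assumes T: "T \<ge> 16384" and m1: "1 \<le> m" and mT: "m \<le> T" and B: "T \<le> (m + 1) * (7 + 6 * ln T)"
  shows "m * (m - 1) / 2 \<ge> (1/256) * (T^2 / (ln T)^2)"
proof -
  define L where "L = ln T"
  have L4: "L \<ge> 4" and TL: "64 * L \<le> T" using ln_big[OF T] unfolding L_def by auto
  have Lp: "L > 0" using L4 by simp
  define a where "a = T / (8 * L)"
  have "7 + 6 * L \<le> 8 * L" using L4 by simp
  hence "T \<le> (m + 1) * (8 * L)" using B m1 unfolding L_def[symmetric]
    by (smt (verit) mult_left_mono)
  hence am: "a \<le> m + 1" unfolding a_def using Lp by (simp add: field_simps)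
  have a8: "a \<ge> 8" unfolding a_def using TL Lp by (simp add: field_simps)
  have 1: "m \<ge> 7/8 * a" using am a8 by simp
  have 2: "m - 1 \<ge> 3/4 * a" using am a8 by simp
  have "m * (m - 1) \<ge> (7/8 * a) * (3/4 * a)" using 1 2 a8 by (intro mult_mono) auto
  moreover have "m * (m - 1) \<ge> 0" using 2 a8 m1 by simp
  ultimately have "m * (m - 1) / 2 \<ge> a^2 / 4" by (simp add: power2_eq_square)
  moreover have "a^2 / 4 = (1/256) * (T^2 / L^2)" unfolding a_def by (simp add: power_divide power_mult_distrib)
  ultimately show ?thesis unfolding L_def by simp
qed



lemma lt_eq: "loss_traj AA (\<lambda>_. 0) ch k = LL k"
  by (induction k) (simp_all add: st_0 st_Suc)

lemma lt0: "loss_traj AA (\<lambda>_. 0) js k 0 = real k"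
  by (induction k) (simp_all add: AA_def)

lemma ch_fun: "lcb_choice 2 AA (\<lambda>_. 0) (\<lambda>_. 0) = ch"
  by (rule ext) (simp add: ch_def)

lemma NN_Suc1: "NN (Suc k) 1 = NN k 1 + (if ch k = 1 then 1 else 0)"
  using ch01[of k] by (auto simp: st_Suc)

lemma cum_lcb: "cum_loss AA (\<lambda>_. 0) ch T = (\<Sum>k<T. real k) + real (NN T 1) * (real (NN T 1) - 1) / 2"
proof (induction T)
  case 0
  show ?case by (simp add: cum_loss_def st_0)
next
  case (Suc T)
  have I: "LL T 0 = real T" "LL T 1 = real T + real (NN T 1)" using inv[of T] by (auto simp: Inv_def)
  have "cum_loss AA (\<lambda>_. 0) ch (Suc T) = cum_loss AA (\<lambda>_. 0) ch T + LL T (ch T)"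
    by (simp add: cum_loss_def lt_eq)
  then show ?case using Suc.IH ch01[of T] I NN_Suc1[of T]
    by (auto simp: field_simps)
qed

lemma cum_zero: "cum_loss AA (\<lambda>_. 0) (restrict (\<lambda>_. 0) {..<T}) T = (\<Sum>k<T. real k)"
  unfolding cum_loss_def by (intro sum.cong) (auto simp: lt0)

lemma regret_lb: "lcb_regret 2 AA (\<lambda>_. 0) (\<lambda>_. 0) T \<ge> real (NN T 1) * (real (NN T 1) - 1) / 2"
proof -
  let ?S = "(\<lambda>js'. cum_loss AA (\<lambda>_. 0) js' T) ` ({..<T} \<rightarrow>\<^sub>E {..<2})"
  have mem: "restrict (\<lambda>_. 0) {..<T} \<in> {..<T} \<rightarrow>\<^sub>E {..<(2::nat)}" by auto
  have "Min ?S \<le> cum_loss AA (\<lambda>_. 0) (restrict (\<lambda>_. 0) {..<T}) T"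
    using mem by (intro Min_le) (auto simp: finite_PiE)
  thus ?thesis unfolding lcb_regret_def ch_fun regret_def cum_lcb cum_zero by simp
qed

lemma m_bound:
  assumes "T \<ge> 2"
  shows "1 \<le> NN T 1" "NN T 1 \<le> T" "real T \<le> (real (NN T 1) + 1) * (7 + 6 * ln (real T))"
proof -
  define m where "m = NN T 1"
  have m1: "m \<ge> 1" and mT: "m \<le> T" and P: "real T \<le> 2 * SS T 1 / real m + real m + 6"
    and Q: "SS T 1 \<le> real m * (real m + 1) * (1/2 + 3 * ln (real m))"
    using inv[of T] assms unfolding Inv_def m_def by auto
  show "1 \<le> NN T 1" "NN T 1 \<le> T" using m1 mT m_def by auto
  have mp: "real m > 0" using m1 by simp
  have lnm: "ln (real m) \<le> ln (real T)" using m1 mT by (intro ln_mono) auto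
  have "2 * SS T 1 / real m \<le> 2 * (real m * (real m + 1) * (1/2 + 3 * ln (real m))) / real m"
    using Q mp by (intro divide_right_mono) auto
  also have "\<dots> = (real m + 1) * (1 + 6 * ln (real m))" using mp by (simp add: field_simps)
  also have "\<dots> \<le> (real m + 1) * (1 + 6 * ln (real T))" using lnm mp by (intro mult_left_mono) auto
  finally have "real T \<le> (real m + 1) * (1 + 6 * ln (real T)) + real m + 6" using P by linarith
  thus "real T \<le> (real (NN T 1) + 1) * (7 + 6 * ln (real T))" unfolding m_def[symmetric]
    by (simp add: algebra_simps)
qed

theorem proposition2:
  shows "\<exists>(A :: nat \<Rightarrow> nat \<Rightarrow> real) (l1 :: nat \<Rightarrow> real).
     (\<forall>i<2. \<forall>j<2. A i j = A j i) \<and>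
     (\<forall>x :: nat \<Rightarrow> real. (\<Sum>i<2. \<Sum>j<2. x i * A i j * x j) \<ge> 0) \<and>
     (\<forall>i<2. \<forall>j<2. \<bar>A i j\<bar> \<le> 2) \<and>
     lcb_regret 2 A l1 (\<lambda>_. 0) \<in> \<Omega>(\<lambda>T. real T ^ 2 / (ln (real T)) ^ 2)"
proof -
  have h1: "\<forall>i<2. \<forall>j<2. AA i j = AA j i" by (auto simp: AA_def)
  have h3: "\<forall>i<2. \<forall>j<2. \<bar>AA i j\<bar> \<le> 2" by (auto simp: AA_def)
  have h2: "\<forall>x :: nat \<Rightarrow> real. (\<Sum>i<2. \<Sum>j<2. x i * AA i j * x j) \<ge> 0"
  proof
    fix x :: "nat \<Rightarrow> real"
    have "(\<Sum>i<2. \<Sum>j<2. x i * AA i j * x j) = (x 0 + x 1)^2 + (x 1)^2"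
      by (simp add: numeral_2_eq_2 AA_def power2_eq_square algebra_simps)
    thus "(\<Sum>i<2. \<Sum>j<2. x i * AA i j * x j) \<ge> 0" by simp
  qed
  have h4: "lcb_regret 2 AA (\<lambda>_. 0) (\<lambda>_. 0) \<in> \<Omega>(\<lambda>T. real T ^ 2 / (ln (real T)) ^ 2)"
  proof (rule landau_omega.bigI[of "1/256"])
    show "(0::real) < 1/256" by simp
    show "\<forall>\<^sub>F T in at_top. norm (lcb_regret 2 AA (\<lambda>_. 0) (\<lambda>_. 0) T) \<ge> 1/256 * norm (real T ^ 2 / (ln (real T)) ^ 2)"
      unfolding eventually_at_top_linorder
    proof (intro exI allI impI)
      fix T :: nat assume T: "T \<ge> 16384"
      have T2: "T \<ge> 2" using T by simp
      have fa: "real (NN T 1) * (real (NN T 1) - 1) / 2 \<ge> (1/256) * (real T ^ 2 / (ln (real T))^2)"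
        using m_bound[OF T2] T by (intro final_arith) auto
      have gnn: "real T ^ 2 / (ln (real T)) ^ 2 \<ge> 0" by simp
      have "lcb_regret 2 AA (\<lambda>_. 0) (\<lambda>_. 0) T \<ge> (1/256) * (real T ^ 2 / (ln (real T))^2)"
        using fa regret_lb[of T] by linarith
      thus "norm (lcb_regret 2 AA (\<lambda>_. 0) (\<lambda>_. 0) T) \<ge> 1/256 * norm (real T ^ 2 / (ln (real T)) ^ 2)"
        using gnn by simp
    qed
  qed
  show ?thesis
    by (rule exI[of _ AA], rule exI[of _ "\<lambda>_. (0::real)"]) (use h1 h2 h3 h4 in blast)
qed


end
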